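(* The sequence $(M_n)_{n\ge2}$ defined by $$M_n=\frac{2}{n-1}Z_n-4\bigl(\Psi(n)+\gamma\bigr)$$ is a martingale with respect to the filtration $(\mathbb{F}_n)_{n\ge2}$, where $\Psi$ is the digamma function and $\gamma$ Euler's constant.
   Context: Consider the random sequence of trees $(T_n)_{n\ge1}$ with node labels $1,\dots,n$ defined as follows: $T_1$ is a single node labeled $1$; $T_2$ consists of nodes $1,2$ joined by an edge; for $n\ge3$, $T_n$ is obtained from $T_{n-1}$ by adding a node labeled $n$ and an edge joining it to a node $i\in\{1,\dots,n-1\}$ chosen, conditionally on $T_1,\dots,T_{n-1}$, with probability $D_{n-1,i}/(2(n-2))$, where $D_{m,i}$ is the degree of node $i$ in $T_m$. The Zagreb index of $T_n$ is $Z_n=\sum_{j=1}^n D_{n,j}^2$. $\mathbb{F}_n$ is the $\sigma$-field generated by $T_1,\dots,T_n$. *)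

theory Defs
  imports "HOL-Probability.Probability"
begin

text \<open>The tree T_n is encoded by its edge set; node j (2 <= j <= n) is joined to its
  parent p j. The vertex set of T_n is always {1..n}.\<close>
definition tree_edges :: "(nat \<Rightarrow> nat) \<Rightarrow> nat \<Rightarrow> nat set set" where
  "tree_edges p n = {{p j, j} | j. 2 \<le> j \<and> j \<le> n}"

definition deg :: "nat set set \<Rightarrow> nat \<Rightarrow> nat" where
  "deg E i = card {e \<in> E. i \<in> e}"

definition zagreb :: "nat \<Rightarrow> nat set set \<Rightarrow> nat" where
  "zagreb n E = (\<Sum>j = 1..n. (deg E j)\<^sup>2)"

definition tree_filtration :: "'a measure \<Rightarrow> ('a \<Rightarrow> nat \<Rightarrow> nat) \<Rightarrow> nat \<Rightarrow> 'a measure" where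
  "tree_filtration M X n =
     sigma (space M) {{\<omega> \<in> space M. tree_edges (X \<omega>) k \<in> A} | k A. 1 \<le> k \<and> k \<le> n}"

definition martingale_from ::
  "nat \<Rightarrow> 'a measure \<Rightarrow> (nat \<Rightarrow> 'a measure) \<Rightarrow> (nat \<Rightarrow> 'a \<Rightarrow> real) \<Rightarrow> bool" where
  "martingale_from n0 M F Y \<longleftrightarrow>
     (\<forall>n\<ge>n0. subalgebra M (F n)) \<and>
     (\<forall>n m. n0 \<le> n \<and> n \<le> m \<longrightarrow> sets (F n) \<subseteq> sets (F m)) \<and>
     (\<forall>n\<ge>n0. Y n \<in> borel_measurable (F n) \<and> integrable M (Y n)) \<and>
     (\<forall>n\<ge>n0. AE \<omega> in M. real_cond_exp M (F n) (Y (Suc n)) \<omega> = Y n \<omega>)"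

end

theory Submission
  imports Defs
begin

definition good :: "(nat \<Rightarrow> nat) \<Rightarrow> nat \<Rightarrow> bool" where
  "good p n = (\<forall>j\<in>{2..n}. 1 \<le> p j \<and> p j < j)"

lemma te_Suc: "tree_edges p (Suc n) = (if n = 0 then {} else insert {p (Suc n), Suc n} (tree_edges p n))"
proof (cases "n = 0")
  case False
  then show ?thesis unfolding tree_edges_def
    by (auto simp: le_Suc_eq) (rule exI[of _ "Suc n"], auto)
qed (auto simp: tree_edges_def)

lemma te_img: "tree_edges p n = (\<lambda>j. {p j, j}) ` {2..n}"
  unfolding tree_edges_def by auto

lemma te_finite[simp]: "finite (tree_edges p n)"
  unfolding te_img by simp

lemma te_card: "card (tree_edges p n) \<le> n"
  unfolding te_img using card_image_le[of "{2..n}" "\<lambda>j. {p j, j}"] by simp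

lemma deg_le: "finite E \<Longrightarrow> deg E i \<le> card E"
  unfolding deg_def by (rule card_mono) auto

lemma deg_te_le: "deg (tree_edges p n) i \<le> n"
  using deg_le[of "tree_edges p n" i] te_card[of p n] by simp

lemma good_Suc: "good p (Suc n) \<Longrightarrow> good p n"
  unfolding good_def by auto

lemma good_D: "good p n \<Longrightarrow> 2 \<le> j \<Longrightarrow> j \<le> n \<Longrightarrow> 1 \<le> p j \<and> p j < j"
  by (simp add: good_def)

lemma te_notin: assumes "good p n" "e \<in> tree_edges p n" shows "Suc n \<notin> e"
proof -
  obtain j where "e = {p j, j}" "2 \<le> j" "j \<le> n" using assms(2) unfolding tree_edges_def by auto
  then show ?thesis using good_D[OF assms(1), of j] by auto
qed

lemma deg_insert: "finite E \<Longrightarrow> e \<notin> E \<Longrightarrow> deg (insert e E) i = deg E i + (if i \<in> e then 1 else 0)"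
proof (cases "i \<in> e")
  case True
  assume a: "finite E" "e \<notin> E"
  have "{x \<in> insert e E. i \<in> x} = insert e {x \<in> E. i \<in> x}" using True by auto
  then show ?thesis unfolding deg_def using a True by simp
next
  case False
  assume a: "finite E" "e \<notin> E"
  have "{x \<in> insert e E. i \<in> x} = {x \<in> E. i \<in> x}" using False by auto
  then show ?thesis unfolding deg_def using a False by simp
qed

lemma deg_zero: "good p n \<Longrightarrow> deg (tree_edges p n) (Suc n) = 0"
  unfolding deg_def using te_notin[of p n] by auto

lemma deg_step:
  assumes "good p (Suc n)" "n \<ge> 1"
  shows "deg (tree_edges p (Suc n)) i = deg (tree_edges p n) i + (if i = p (Suc n) \<or> i = Suc n then 1 else 0)"
proof -
  have g: "good p n" using assms good_Suc by blast
  have "{p (Suc n), Suc n} \<notin> tree_edges p n" using te_notin[OF g] by blast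
  then show ?thesis using assms deg_insert[of "tree_edges p n" "{p (Suc n), Suc n}" i]
    by (simp add: te_Suc)
qed

lemma degsum:
  assumes "good p n" "n \<ge> 1"
  shows "(\<Sum>i=1..n. deg (tree_edges p n) i) = 2 * (n - 1)"
  using assms
proof (induction n)
  case 0 then show ?case by simp
next
  case (Suc n)
  show ?case
  proof (cases "n = 0")
    case True then show ?thesis by (simp add: te_Suc deg_def)
  next
    case False
    have g: "good p n" using Suc good_Suc by blast
    have q: "1 \<le> p (Suc n)" "p (Suc n) \<le> n" using good_D[OF Suc.prems(1), of "Suc n"] False by auto
    have "(\<Sum>i=1..Suc n. deg (tree_edges p (Suc n)) i)
        = (\<Sum>i=1..Suc n. deg (tree_edges p n) i + (if i = p (Suc n) \<or> i = Suc n then 1 else 0))"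
      using deg_step[OF Suc.prems(1)] False by simp
    also have "\<dots> = (\<Sum>i=1..Suc n. deg (tree_edges p n) i) + (\<Sum>i=1..Suc n. (if i = p (Suc n) \<or> i = Suc n then 1 else 0))"
      by (rule sum.distrib)
    also have "(\<Sum>i=1..Suc n. deg (tree_edges p n) i) = (\<Sum>i=1..n. deg (tree_edges p n) i)"
      using deg_zero[OF g] by simp
    also have "\<dots> = 2 * (n - 1)" using Suc.IH g False by simp
    also have "(\<Sum>i=1..Suc n. (if i = p (Suc n) \<or> i = Suc n then 1 else (0::nat)))
        = (\<Sum>i=1..Suc n. (if i = p (Suc n) then 1 else 0) + (if i = Suc n then 1 else 0))"
      by (rule sum.cong) (use q in auto)
    also have "\<dots> = 2" using q by (simp add: sum.distrib)
    finally show ?thesis using False by simp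
  qed
qed

lemma zag_step:
  assumes "good p (Suc n)" "n \<ge> 1"
  shows "zagreb (Suc n) (tree_edges p (Suc n)) = zagreb n (tree_edges p n) + 2 * deg (tree_edges p n) (p (Suc n)) + 2"
proof -
  have g: "good p n" using assms good_Suc by blast
  have q: "1 \<le> p (Suc n)" "p (Suc n) \<le> n" using good_D[OF assms(1), of "Suc n"] assms(2) by auto
  let ?d = "deg (tree_edges p n)"
  have "zagreb (Suc n) (tree_edges p (Suc n)) = (\<Sum>j=1..Suc n. (?d j + (if j = p (Suc n) \<or> j = Suc n then 1 else 0))\<^sup>2)"
    unfolding zagreb_def using deg_step[OF assms] by simp
  also have "\<dots> = (\<Sum>j=1..n. (?d j + (if j = p (Suc n) then 1 else 0))\<^sup>2) + 1"
    using deg_zero[OF g] q by simp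
  also have "(\<Sum>j=1..n. (?d j + (if j = p (Suc n) then 1 else 0))\<^sup>2) = (\<Sum>j=1..n. (?d j)\<^sup>2 + (if j = p (Suc n) then 2 * ?d j + 1 else 0))"
    by (rule sum.cong) (auto simp: power2_eq_square)
  also have "\<dots> = (\<Sum>j=1..n. (?d j)\<^sup>2) + (2 * ?d (p (Suc n)) + 1)"
    using q by (simp add: sum.distrib)
  finally show ?thesis unfolding zagreb_def by simp
qed


locale tsetup = prob_space M for M :: "'a measure" +
  fixes X :: "'a \<Rightarrow> nat \<Rightarrow> nat"
  assumes Xm[measurable]: "\<And>j. (\<lambda>\<omega>. X \<omega> j) \<in> measurable M (count_space UNIV)"
    and X2: "\<And>\<omega>. \<omega> \<in> space M \<Longrightarrow> X \<omega> 2 = 1"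
    and CP: "\<And>n i. 3 \<le> n \<Longrightarrow> i \<in> {1..n-1} \<Longrightarrow>
           AE \<omega> in M. real_cond_exp M (tree_filtration M X (n - 1))
                          (indicator {\<omega> \<in> space M. X \<omega> n = i}) \<omega>
                        = real (deg (tree_edges (X \<omega>) (n - 1)) i) / (2 * (real n - 2))"
begin

lemma E_meas[measurable]: "(\<lambda>\<omega>. tree_edges (X \<omega>) n) \<in> measurable M (count_space UNIV)"
proof (induction n)
  case 0
  have "(\<lambda>\<omega>. tree_edges (X \<omega>) 0) = (\<lambda>\<omega>. {})" by (auto simp: te_img)
  then show ?case by simp
next
  case (Suc n)
  show ?case
  proof (cases "n = 0")
    case True then show ?thesis by (simp add: te_Suc)
  next
    case False
    have "(\<lambda>\<omega>. tree_edges (X \<omega>) (Suc n)) = (\<lambda>\<omega>. (\<lambda>i \<omega>. insert {i, Suc n} (tree_edges (X \<omega>) n)) (X \<omega> (Suc n)) \<omega>)"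
      using False by (simp add: te_Suc)
    also have "\<dots> \<in> measurable M (count_space UNIV)"
      apply (rule measurable_compose_countable'[where I=UNIV and f="\<lambda>i \<omega>. insert {i, Suc n} (tree_edges (X \<omega>) n)" and g="\<lambda>\<omega>. X \<omega> (Suc n)"])
      subgoal for i using measurable_compose[OF Suc.IH, of "\<lambda>E. insert {i, Suc n} E" "count_space UNIV"] by simp
      by auto
    finally show ?thesis .
  qed
qed

lemma Eg_meas: "(\<lambda>\<omega>. g (tree_edges (X \<omega>) n)) \<in> measurable M (count_space UNIV)"
  using measurable_compose[OF E_meas, of g "count_space UNIV"] by simp

lemma Eg_borel[measurable]: "(\<lambda>\<omega>. g (tree_edges (X \<omega>) n) :: real) \<in> borel_measurable M"
  using measurable_compose[OF E_meas, of g borel] by simp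

definition G :: "nat \<Rightarrow> 'a set set" where
  "G m = {{\<omega> \<in> space M. tree_edges (X \<omega>) k \<in> A} | k A. 1 \<le> k \<and> k \<le> m}"

lemma G_Pow: "G m \<subseteq> Pow (space M)" unfolding G_def by auto

lemma G_sets: "G m \<subseteq> sets M"
proof
  fix S assume "S \<in> G m"
  then obtain k A where S: "S = {\<omega> \<in> space M. tree_edges (X \<omega>) k \<in> A}" unfolding G_def by auto
  have "(\<lambda>\<omega>. tree_edges (X \<omega>) k) -` A \<inter> space M \<in> sets M"
    using measurable_sets[OF E_meas, of A k] by simp
  moreover have "(\<lambda>\<omega>. tree_edges (X \<omega>) k) -` A \<inter> space M = S" using S by auto
  ultimately show "S \<in> sets M" by simp
qed

lemma F_eq: "tree_filtration M X m = sigma (space M) (G m)"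
  unfolding tree_filtration_def G_def by simp

lemma space_F[simp]: "space (tree_filtration M X m) = space M"
  unfolding F_eq using G_Pow by (simp add: space_measure_of)

lemma sets_F: "sets (tree_filtration M X m) = sigma_sets (space M) (G m)"
  unfolding F_eq using G_Pow by (simp add: sets_measure_of)

lemma subalg: "subalgebra M (tree_filtration M X m)"
  unfolding subalgebra_def using sets_F sets.sigma_sets_subset[OF G_sets] by simp

lemma F_mono: "n \<le> m \<Longrightarrow> sets (tree_filtration M X n) \<subseteq> sets (tree_filtration M X m)"
  unfolding sets_F by (rule sigma_sets_mono') (auto simp: G_def)

lemma F_meas:
  assumes "1 \<le> k" "k \<le> m" "\<And>E. g E \<in> space N"
  shows "(\<lambda>\<omega>. g (tree_edges (X \<omega>) k)) \<in> measurable (tree_filtration M X m) N"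
proof (rule measurableI)
  fix x show "g (tree_edges (X x) k) \<in> space N" by (rule assms(3))
next
  fix B assume "B \<in> sets N"
  have "(\<lambda>\<omega>. g (tree_edges (X \<omega>) k)) -` B \<inter> space (tree_filtration M X m)
        = {\<omega> \<in> space M. tree_edges (X \<omega>) k \<in> g -` B}" by auto
  also have "\<dots> \<in> G m" unfolding G_def using assms by blast
  finally show "(\<lambda>\<omega>. g (tree_edges (X \<omega>) k)) -` B \<inter> space (tree_filtration M X m) \<in> sets (tree_filtration M X m)"
    unfolding sets_F by auto
qed

lemma Eg_int:
  assumes "\<And>\<omega>. \<omega> \<in> space M \<Longrightarrow> \<bar>g (tree_edges (X \<omega>) n)\<bar> \<le> B"
  shows "integrable M (\<lambda>\<omega>. g (tree_edges (X \<omega>) n) :: real)"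
  by (rule integrable_const_bound[where B=B]) (use assms in auto)

lemma indic_int: "A \<in> sets M \<Longrightarrow> integrable M (indicator A :: 'a \<Rightarrow> real)"
  by (rule integrable_const_bound[where B=1]) (auto simp: indicator_def)

lemma deg_div_bound:
  assumes "n \<ge> 2"
  shows "\<bar>real (deg (tree_edges p n) i) / (2 * (real n - 1))\<bar> \<le> real n"
proof -
  define d where "d = real (deg (tree_edges p n) i)"
  define c where "c = 2 * (real n - 1)"
  have dn: "d \<le> real n" using deg_te_le[of p n i] unfolding d_def by simp
  have c1: "c \<ge> 1" using assms unfolding c_def by simp
  have d0: "d \<ge> 0" unfolding d_def by simp
  have "d * 1 \<le> d * c" by (rule mult_left_mono) (use c1 d0 in auto)
  then have "d / c \<le> d" using c1 by (simp add: divide_le_eq)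
  moreover have "d / c \<ge> 0" using c1 d0 by simp
  ultimately show ?thesis using dn unfolding d_def[symmetric] c_def[symmetric] by simp
qed

lemma goodAE: "AE \<omega> in M. good (X \<omega>) n"
proof (induction n)
  case 0 show ?case by (simp add: good_def)
next
  case (Suc n)
  show ?case
  proof (cases "n \<le> 1")
    case True
    have "good (X \<omega>) (Suc n)" if "\<omega> \<in> space M" for \<omega>
      unfolding good_def
    proof
      fix j assume "j \<in> {2..Suc n}"
      then have "j = 2" using True by auto
      then show "1 \<le> X \<omega> j \<and> X \<omega> j < j" using X2[OF that] by simp
    qed
    then show ?thesis by (rule AE_I2)
  next
    case False
    then have n2: "n \<ge> 2" by simp
    interpret S: finite_measure_subalgebra M "tree_filtration M X n"
      by unfold_locales (auto simp: subalg)
    define A where "A i = {\<omega> \<in> space M. X \<omega> (Suc n) = i}" for i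
    have Asets[measurable]: "A i \<in> sets M" for i unfolding A_def by measurable
    have ce: "AE \<omega> in M. real_cond_exp M (tree_filtration M X n) (indicator (A i)) \<omega>
                = real (deg (tree_edges (X \<omega>) n) i) / (2 * (real n - 1))" if "i \<in> {1..n}" for i
    proof -
      have "real (Suc n) - 2 = real n - 1" by simp
      then show ?thesis using CP[of "Suc n" i] n2 that unfolding A_def by simp
    qed
    have int_eq: "prob (A i) = (\<integral>\<omega>. real (deg (tree_edges (X \<omega>) n) i) / (2 * (real n - 1)) \<partial>M)"
      if "i \<in> {1..n}" for i
    proof -
      have "prob (A i) = (\<integral>\<omega>. indicator (A i) \<omega> \<partial>M)"
        using sets.sets_into_space[OF Asets[of i]] by (simp add: Int_absorb2)
      also have "\<dots> = (\<integral>\<omega>. real_cond_exp M (tree_filtration M X n) (indicator (A i)) \<omega> \<partial>M)"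
        using S.real_cond_exp_int(2)[OF indic_int[OF Asets[of i]]] by simp
      also have "\<dots> = (\<integral>\<omega>. real (deg (tree_edges (X \<omega>) n) i) / (2 * (real n - 1)) \<partial>M)"
        by (rule integral_cong_AE) (use ce[OF that] in auto)
      finally show ?thesis .
    qed
    have intd: "integrable M (\<lambda>\<omega>. real (deg (tree_edges (X \<omega>) n) i) / (2 * (real n - 1)))" for i
      by (rule Eg_int[where B="real n"]) (rule deg_div_bound[OF n2])
    have sum1: "(\<Sum>i\<in>{1..n}. prob (A i)) = 1"
    proof -
      have "(\<Sum>i\<in>{1..n}. prob (A i))
          = (\<Sum>i\<in>{1..n}. (\<integral>\<omega>. real (deg (tree_edges (X \<omega>) n) i) / (2 * (real n - 1)) \<partial>M))"
        by (rule sum.cong) (auto simp: int_eq)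
      also have "\<dots> = (\<integral>\<omega>. (\<Sum>i\<in>{1..n}. real (deg (tree_edges (X \<omega>) n) i) / (2 * (real n - 1))) \<partial>M)"
        using intd by (subst Bochner_Integration.integral_sum) blast+
      also have "\<dots> = (\<integral>\<omega>. 1 \<partial>M)"
      proof (rule integral_cong_AE)
        show "AE \<omega> in M. (\<Sum>i\<in>{1..n}. real (deg (tree_edges (X \<omega>) n) i) / (2 * (real n - 1))) = 1"
          using Suc.IH
        proof eventually_elim
          case (elim \<omega>)
          have "(\<Sum>i\<in>{1..n}. real (deg (tree_edges (X \<omega>) n) i) / (2 * (real n - 1)))
              = real (\<Sum>i\<in>{1..n}. deg (tree_edges (X \<omega>) n) i) / (2 * (real n - 1))"
            by (simp add: sum_divide_distrib)
          also have "\<dots> = 1" using degsum[OF elim] n2 by (simp add: of_nat_diff)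
          finally show ?case .
        qed
      qed auto
      also have "\<dots> = 1" by (simp add: prob_space)
      finally show ?thesis .
    qed
    have "prob {\<omega> \<in> space M. X \<omega> (Suc n) \<in> {1..n}} = prob (\<Union>i\<in>{1..n}. A i)"
      unfolding A_def by (rule arg_cong[where f=prob]) auto
    also have "\<dots> = (\<Sum>i\<in>{1..n}. prob (A i))"
      by (rule finite_measure_finite_Union) (auto simp: disjoint_family_on_def A_def)
    finally have "prob {\<omega> \<in> space M. X \<omega> (Suc n) \<in> {1..n}} = 1" using sum1 by simp
    moreover have "{\<omega> \<in> space M. X \<omega> (Suc n) \<in> {1..n}} \<in> sets M"
    proof -
      have "{\<omega> \<in> space M. X \<omega> (Suc n) \<in> {1..n}} = (\<lambda>\<omega>. X \<omega> (Suc n)) -` {1..n} \<inter> space M" by auto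
      then show ?thesis using measurable_sets[OF Xm, of "{1..n}" "Suc n"] by simp
    qed
    ultimately have "AE \<omega> in M. X \<omega> (Suc n) \<in> {1..n}"
      using prob_Collect_eq_1[of "\<lambda>\<omega>. X \<omega> (Suc n) \<in> {1..n}"] by blast
    with Suc.IH show ?thesis
    proof eventually_elim
      case (elim \<omega>)
      then show ?case unfolding good_def by (auto simp: le_Suc_eq)
    qed
  qed
qed

definition Yf :: "nat \<Rightarrow> 'a \<Rightarrow> real" where
  "Yf n \<omega> = 2 / (real n - 1) * real (zagreb n (tree_edges (X \<omega>) n))
                  - 4 * (Digamma (real n) + euler_mascheroni)"

lemma zag_le: "zagreb n (tree_edges p n) \<le> n * n^2"
proof -
  have "zagreb n (tree_edges p n) \<le> (\<Sum>j=1..n. n^2)"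
    unfolding zagreb_def by (rule sum_mono) (simp add: deg_te_le power_mono)
  then show ?thesis by simp
qed

lemma Yf_meas: "Yf n \<in> borel_measurable M"
  unfolding Yf_def[abs_def] by (rule Eg_borel)

lemma Yf_Fmeas: "n \<ge> 1 \<Longrightarrow> Yf n \<in> borel_measurable (tree_filtration M X n)"
  unfolding Yf_def[abs_def] by (rule F_meas) auto

lemma Yf_int: "integrable M (Yf n)"
proof -
  let ?c = "4 * (Digamma (real n) + euler_mascheroni)"
  show ?thesis unfolding Yf_def[abs_def]
  proof (rule Eg_int[where B="\<bar>2 / (real n - 1)\<bar> * (real n * real n ^ 2) + \<bar>?c\<bar>"])
    fix \<omega>
    have z: "real (zagreb n (tree_edges (X \<omega>) n)) \<le> real n * real n ^ 2"
      using zag_le[of n "X \<omega>"] by (metis of_nat_le_iff of_nat_mult of_nat_power)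
    have "\<bar>2 / (real n - 1) * real (zagreb n (tree_edges (X \<omega>) n))\<bar> \<le> \<bar>2 / (real n - 1)\<bar> * (real n * real n ^ 2)"
      unfolding abs_mult using z by (intro mult_left_mono) auto
    then show "\<bar>2 / (real n - 1) * real (zagreb n (tree_edges (X \<omega>) n)) - ?c\<bar>
       \<le> \<bar>2 / (real n - 1)\<bar> * (real n * real n ^ 2) + \<bar>?c\<bar>" by linarith
  qed
qed

lemma step:
  assumes n2: "n \<ge> 2"
  shows "AE \<omega> in M. real_cond_exp M (tree_filtration M X n) (Yf (Suc n)) \<omega> = Yf n \<omega>"
proof -
  interpret S: finite_measure_subalgebra M "tree_filtration M X n"
    by unfold_locales (auto simp: subalg)
  define c where "c = 4 * (Digamma (real (Suc n)) + euler_mascheroni)"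
  define Z where "Z \<omega> = real (zagreb n (tree_edges (X \<omega>) n))" for \<omega>
  define d where "d i \<omega> = real (deg (tree_edges (X \<omega>) n) i)" for i \<omega>
  define I where "I i = (indicator {\<omega> \<in> space M. X \<omega> (Suc n) = i} :: 'a \<Rightarrow> real)" for i
  define h where "h i \<omega> = 2 / real n * (2 * d i \<omega> + 2)" for i \<omega>
  define a where "a \<omega> = 2 / real n * Z \<omega> - c" for \<omega>
  define f where "f i \<omega> = h i \<omega> * I i \<omega>" for i \<omega>
  have Isets[measurable]: "{\<omega> \<in> space M. X \<omega> (Suc n) = i} \<in> sets M" for i by measurable
  have I_meas[measurable]: "I i \<in> borel_measurable M" for i unfolding I_def by measurable
  have a_F: "a \<in> borel_measurable (tree_filtration M X n)"
    unfolding a_def[abs_def] Z_def by (rule F_meas) (use n2 in auto)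
  have h_F: "h i \<in> borel_measurable (tree_filtration M X n)" for i
    unfolding h_def[abs_def] d_def by (rule F_meas) (use n2 in auto)
  have a_M[measurable]: "a \<in> borel_measurable M"
    unfolding a_def[abs_def] Z_def by (rule Eg_borel)
  have h_M[measurable]: "h i \<in> borel_measurable M" for i
    unfolding h_def[abs_def] d_def by (rule Eg_borel)
  have f_M[measurable]: "f i \<in> borel_measurable M" for i
    unfolding f_def[abs_def] by measurable
  have dn: "d i \<omega> \<le> real n" "d i \<omega> \<ge> 0" for i \<omega>
    unfolding d_def using deg_te_le[of "X \<omega>" n i] by auto
  have a_int: "integrable M a"
  proof (rule integrable_const_bound[where B="2 / real n * (real n * real n ^ 2) + \<bar>c\<bar>"])
    show "AE \<omega> in M. norm (a \<omega>) \<le> 2 / real n * (real n * real n ^ 2) + \<bar>c\<bar>"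
    proof (rule AE_I2)
      fix \<omega>
      have z: "Z \<omega> \<le> real n * real n ^ 2" "Z \<omega> \<ge> 0" unfolding Z_def
        using zag_le[of n "X \<omega>"] by (metis of_nat_le_iff of_nat_mult of_nat_power, simp)
      have "2 / real n * Z \<omega> \<le> 2 / real n * (real n * real n ^ 2)"
        using z by (intro mult_left_mono) auto
      moreover have "2 / real n * Z \<omega> \<ge> 0" using z by simp
      ultimately show "norm (a \<omega>) \<le> 2 / real n * (real n * real n ^ 2) + \<bar>c\<bar>"
        unfolding a_def by simp
    qed
  qed simp
  have f_int: "integrable M (f i)" for i
  proof (rule integrable_const_bound[where B="2 / real n * (2 * real n + 2)"])
    show "AE \<omega> in M. norm (f i \<omega>) \<le> 2 / real n * (2 * real n + 2)"
    proof (rule AE_I2)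
      fix \<omega>
      have "h i \<omega> \<le> 2 / real n * (2 * real n + 2)" unfolding h_def
        using dn[of i \<omega>] by (intro mult_left_mono) auto
      moreover have "h i \<omega> \<ge> 0" unfolding h_def using dn[of i \<omega>] by simp
      ultimately show "norm (f i \<omega>) \<le> 2 / real n * (2 * real n + 2)"
        unfolding f_def I_def by (auto simp: indicator_def)
    qed
  qed simp
  have sum_int: "integrable M (\<lambda>\<omega>. \<Sum>i\<in>{1..n}. f i \<omega>)"
    by (intro Bochner_Integration.integrable_sum f_int)
  have ae1: "AE \<omega> in M. Yf (Suc n) \<omega> = a \<omega> + (\<Sum>i\<in>{1..n}. f i \<omega>)"
    using goodAE[of "Suc n"] AE_space
  proof eventually_elim
    case (elim \<omega>)
    let ?q = "X \<omega> (Suc n)"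
    have q: "1 \<le> ?q" "?q \<le> n" using good_D[OF elim(1), of "Suc n"] n2 by auto
    have "(\<Sum>i\<in>{1..n}. f i \<omega>) = (\<Sum>i\<in>{1..n}. if i = ?q then h i \<omega> else 0)"
      by (rule sum.cong) (auto simp: f_def I_def indicator_def elim(2))
    also have "\<dots> = h ?q \<omega>" using q by simp
    finally have s: "(\<Sum>i\<in>{1..n}. f i \<omega>) = h ?q \<omega>" .
    have zs: "real (zagreb (Suc n) (tree_edges (X \<omega>) (Suc n))) = Z \<omega> + 2 * d ?q \<omega> + 2"
      unfolding Z_def d_def using zag_step[OF elim(1)] n2 by simp
    show ?case unfolding Yf_def s zs a_def h_def c_def by (simp add: algebra_simps)
  qed
  have c1: "AE \<omega> in M. real_cond_exp M (tree_filtration M X n) (Yf (Suc n)) \<omega>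
      = real_cond_exp M (tree_filtration M X n) (\<lambda>\<omega>. a \<omega> + (\<Sum>i\<in>{1..n}. f i \<omega>)) \<omega>"
    by (rule S.real_cond_exp_cong[OF ae1]) (auto simp: Yf_meas)
  have c2: "AE \<omega> in M. real_cond_exp M (tree_filtration M X n) (\<lambda>\<omega>. a \<omega> + (\<Sum>i\<in>{1..n}. f i \<omega>)) \<omega>
      = real_cond_exp M (tree_filtration M X n) a \<omega> + real_cond_exp M (tree_filtration M X n) (\<lambda>\<omega>. \<Sum>i\<in>{1..n}. f i \<omega>) \<omega>"
    by (rule S.real_cond_exp_add[OF a_int sum_int])
  have c3: "AE \<omega> in M. real_cond_exp M (tree_filtration M X n) a \<omega> = a \<omega>"
    by (rule S.real_cond_exp_F_meas[OF a_int a_F])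
  have c4: "AE \<omega> in M. real_cond_exp M (tree_filtration M X n) (\<lambda>\<omega>. \<Sum>i\<in>{1..n}. f i \<omega>) \<omega>
      = (\<Sum>i\<in>{1..n}. real_cond_exp M (tree_filtration M X n) (f i) \<omega>)"
    by (rule S.real_cond_exp_sum[OF f_int])
  have c56: "AE \<omega> in M. \<forall>i\<in>{1..n}. real_cond_exp M (tree_filtration M X n) (f i) \<omega>
      = h i \<omega> * (d i \<omega> / (2 * (real n - 1)))"
  proof (rule AE_finite_allI)
    fix i assume i: "i \<in> {1..n}"
    have c5: "AE \<omega> in M. real_cond_exp M (tree_filtration M X n) (\<lambda>\<omega>. h i \<omega> * I i \<omega>) \<omega>
        = h i \<omega> * real_cond_exp M (tree_filtration M X n) (I i) \<omega>"
      by (rule S.real_cond_exp_mult[OF h_F I_meas]) (use f_int[of i] in \<open>simp add: f_def[abs_def]\<close>)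
    have c6: "AE \<omega> in M. real_cond_exp M (tree_filtration M X n) (I i) \<omega> = d i \<omega> / (2 * (real n - 1))"
    proof -
      have "real (Suc n) - 2 = real n - 1" by simp
      then show ?thesis using CP[of "Suc n" i] n2 i unfolding I_def d_def by simp
    qed
    from c5 c6 show "AE \<omega> in M. real_cond_exp M (tree_filtration M X n) (f i) \<omega>
      = h i \<omega> * (d i \<omega> / (2 * (real n - 1)))"
      unfolding f_def[abs_def] by eventually_elim simp
  qed simp
  from c1 c2 c3 c4 c56 goodAE[of n] show ?thesis
  proof eventually_elim
    case (elim \<omega>)
    have rw: "h i \<omega> * (d i \<omega> / (2 * (real n - 1))) = 2 / (real n * (real n - 1)) * ((d i \<omega>)^2 + d i \<omega>)" for i
      unfolding h_def using n2 by (simp add: field_simps power2_eq_square)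
    have sq: "(\<Sum>i\<in>{1..n}. (d i \<omega>)^2) = Z \<omega>"
      unfolding Z_def d_def zagreb_def by simp
    have "(\<Sum>i\<in>{1..n}. d i \<omega>) = real (\<Sum>i=1..n. deg (tree_edges (X \<omega>) n) i)"
      unfolding d_def by simp
    also have "\<dots> = 2 * (real n - 1)" using degsum[OF elim(6)] n2 by (simp add: of_nat_diff)
    finally have sd: "(\<Sum>i\<in>{1..n}. d i \<omega>) = 2 * (real n - 1)" .
    have "(\<Sum>i\<in>{1..n}. real_cond_exp M (tree_filtration M X n) (f i) \<omega>)
        = (\<Sum>i\<in>{1..n}. 2 / (real n * (real n - 1)) * ((d i \<omega>)^2 + d i \<omega>))"
      using elim(5) rw by simp
    also have "\<dots> = 2 / (real n * (real n - 1)) * (\<Sum>i\<in>{1..n}. (d i \<omega>)^2 + d i \<omega>)"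
      by (rule sum_distrib_left[symmetric])
    also have "\<dots> = 2 / (real n * (real n - 1)) * ((\<Sum>i\<in>{1..n}. (d i \<omega>)^2) + (\<Sum>i\<in>{1..n}. d i \<omega>))"
      by (simp only: sum.distrib)
    also have "\<dots> = 2 / (real n * (real n - 1)) * (Z \<omega> + 2 * (real n - 1))"
      by (simp only: sq sd)
    finally have S: "(\<Sum>i\<in>{1..n}. real_cond_exp M (tree_filtration M X n) (f i) \<omega>)
        = 2 / (real n * (real n - 1)) * (Z \<omega> + 2 * (real n - 1))" .
    have dg: "Digamma (real (Suc n)) = Digamma (real n) + 1 / real n"
      using Digamma_plus1[of "real n"] n2 by (simp add: add.commute)
    have n1: "real n - 1 \<noteq> 0" "real n \<noteq> 0" using n2 by auto
    have "real_cond_exp M (tree_filtration M X n) (Yf (Suc n)) \<omega>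
        = 2 / real n * Z \<omega> - c + 2 / (real n * (real n - 1)) * (Z \<omega> + 2 * (real n - 1))"
      using elim(1-4) S unfolding a_def by simp
    also have "\<dots> = Yf n \<omega>"
      unfolding Yf_def Z_def[symmetric] c_def dg using n1 by (simp add: field_simps)
    finally show ?case .
  qed
qed

end

theorem lemma4p2:
  fixes M :: "'a measure" and X :: "'a \<Rightarrow> nat \<Rightarrow> nat"
  assumes "prob_space M"
    and "\<And>j. (\<lambda>\<omega>. X \<omega> j) \<in> measurable M (count_space UNIV)"
    and "\<And>\<omega>. \<omega> \<in> space M \<Longrightarrow> X \<omega> 2 = 1"
    and "\<And>n i. 3 \<le> n \<Longrightarrow> i \<in> {1..n-1} \<Longrightarrow>
           AE \<omega> in M. real_cond_exp M (tree_filtration M X (n - 1))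
                          (indicator {\<omega> \<in> space M. X \<omega> n = i}) \<omega>
                        = real (deg (tree_edges (X \<omega>) (n - 1)) i) / (2 * (real n - 2))"
  shows "martingale_from 2 M (tree_filtration M X)
           (\<lambda>n \<omega>. 2 / (real n - 1) * real (zagreb n (tree_edges (X \<omega>) n))
                  - 4 * (Digamma (real n) + euler_mascheroni))"
proof -
  have "tsetup M X" unfolding tsetup_def tsetup_axioms_def using assms by auto
  then interpret T: tsetup M X .
  have Y: "(\<lambda>n \<omega>. 2 / (real n - 1) * real (zagreb n (tree_edges (X \<omega>) n))
                  - 4 * (Digamma (real n) + euler_mascheroni)) = T.Yf"
    by (auto simp: fun_eq_iff T.Yf_def)
  show ?thesis unfolding Y martingale_from_def
    using T.subalg T.F_mono T.Yf_Fmeas T.Yf_int T.step by auto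
qed

end
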